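(* Let $N>0$ and let $E$ be a set of integers of cardinality at most $2^N$. Then there is a set $B=\{b_i\}_{i\in\mathbb{Z}}$ of integers such that (i) the sets $b_i+E$, $i\in\mathbb{Z}$, are pairwise disjoint; (ii) $b_i\in[i4^{N+1},(i+1)4^{N+1})$ for every $i\in\mathbb{Z}$; and (iii) $\mathbb{Z}=\bigcup_{n=-4^{N+1}}^{4^{N+1}}(n+B)$. *)

theory Defs
  imports Main
begin

end

theory Submission
  imports Defs "HOL-Library.Nat_Bijection"
begin

definition blk :: "int \<Rightarrow> int \<Rightarrow> int set" where
  "blk M i = {i*M..<(i+1)*M}"

lemma blk_window:
  fixes M :: int
  assumes M: "M > 0" and bj: "b \<in> blk M j" and x: "b + d \<in> blk M i"
  shows "j = (i*M - d) div M \<or> j = (i*M - d) div M + 1"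
proof -
  define q where "q = i*M - d"
  define k where "k = q div M"
  define r where "r = q mod M"
  have qk: "q = k*M + r" "0 \<le> r" "r < M" using M by (auto simp: k_def r_def)
  have b1: "j*M \<le> b" "b < (j+1)*M" using bj by (auto simp: blk_def)
  have b2: "q \<le> b" "b < q + M" using x by (auto simp: blk_def q_def algebra_simps)
  have "j*M < (k+2)*M" using b1 b2 qk by (simp add: algebra_simps)
  hence "j < k+2" using M by (simp add: mult_less_cancel_right)
  moreover have "k*M < (j+1)*M" using b1 b2 qk by (simp add: algebra_simps)
  hence "k < j+1" using M by (simp add: mult_less_cancel_right)
  ultimately show ?thesis unfolding k_def q_def by linarith
qed

lemma free_point:
  fixes M :: int
  assumes M: "M > 0" and D: "finite D" and c: "2 * int (card D) < M"
    and b: "\<forall>j. b j \<in> blk M j"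
  shows "\<exists>x. x \<in> blk M i \<and> (\<forall>j. x - b j \<notin> D)"
proof -
  define F where "F = (\<lambda>(d, t). b ((i*M - d) div M + t) + d) ` (D \<times> {0,1})"
  have fin: "finite F" using D by (simp add: F_def)
  have cF: "card F \<le> 2 * card D"
  proof -
    have "card F \<le> card (D \<times> {0::int,1})" unfolding F_def by (rule card_image_le) (simp add: D)
    also have "\<dots> = 2 * card D" by (simp add: card_cartesian_product)
    finally show ?thesis .
  qed
  have cb: "card (blk M i) = nat M" by (simp add: blk_def algebra_simps)
  have "card F < card (blk M i)" using cF c cb by linarith
  then have "\<not> blk M i \<subseteq> F" using fin by (meson card_mono not_le)
  then obtain x where x: "x \<in> blk M i" "x \<notin> F" by blast
  have "\<forall>j. x - b j \<notin> D"
  proof (intro allI notI)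
    fix j assume d: "x - b j \<in> D"
    have "b j + (x - b j) \<in> blk M i" using x by simp
    from blk_window[OF M b[rule_format] this]
    have "j = (i*M - (x - b j)) div M + 0 \<or> j = (i*M - (x - b j)) div M + 1" by simp
    then obtain t where t: "t \<in> {0::int,1}" "j = (i*M - (x - b j)) div M + t" by blast
    have "x = (\<lambda>(d, t). b ((i*M - d) div M + t) + d) (x - b j, t)" using t by simp
    moreover have "(x - b j, t) \<in> D \<times> {0,1}" using d t by simp
    ultimately have "x \<in> F" unfolding F_def by (rule image_eqI)
    with x show False by simp
  qed
  with x show ?thesis by blast
qed

definition pick :: "int \<Rightarrow> int set \<Rightarrow> int \<Rightarrow> (int \<Rightarrow> int) \<Rightarrow> int" where
  "pick M D i b = (SOME x. x \<in> blk M i \<and> (\<forall>j. x - b j \<notin> D))"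

primrec BB :: "int \<Rightarrow> int set \<Rightarrow> nat \<Rightarrow> int \<Rightarrow> int" where
  "BB M D 0 = (\<lambda>i. i*M)"
| "BB M D (Suc n) = (BB M D n)(int_decode n := pick M D (int_decode n) (BB M D n))"

lemma BB_props:
  fixes M :: int
  assumes M: "M > 0" and D: "finite D" and c: "2 * int (card D) < M"
  shows "\<forall>j. BB M D n j \<in> blk M j"
proof (induction n)
  case 0
  then show ?case using M by (simp add: blk_def algebra_simps)
next
  case (Suc n)
  have "pick M D (int_decode n) (BB M D n) \<in> blk M (int_decode n)"
    unfolding pick_def using someI_ex[OF free_point[OF M D c Suc]] by blast
  with Suc show ?case by simp
qed

lemma BB_pick:
  fixes M :: int
  assumes M: "M > 0" and D: "finite D" and c: "2 * int (card D) < M"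
  shows "\<forall>j. BB M D (Suc n) (int_decode n) - BB M D n j \<notin> D"
proof -
  have "pick M D (int_decode n) (BB M D n) \<in> blk M (int_decode n) \<and>
     (\<forall>j. pick M D (int_decode n) (BB M D n) - BB M D n j \<notin> D)"
    unfolding pick_def using someI_ex[OF free_point[OF M D c BB_props[OF M D c]]] by blast
  then show ?thesis by simp
qed

lemma BB_stable:
  assumes "m < n"
  shows "BB M D n (int_decode m) = BB M D (Suc m) (int_decode m)"
  using assms
proof (induction n)
  case 0 then show ?case by simp
next
  case (Suc n)
  show ?case
  proof (cases "m = n")
    case True then show ?thesis by simp
  next
    case False
    then have "m < n" using Suc by simp
    moreover have "int_decode n \<noteq> int_decode m" using False
      by (metis int_decode_inverse)
    ultimately show ?thesis using Suc by simp
  qed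
qed

theorem lemma3p1:
  fixes N :: nat and E :: "int set"
  assumes "N > 0"
    and "finite E" and "card E \<le> 2 ^ N"
  shows "\<exists>b :: int \<Rightarrow> int.
     (\<forall>i j. i \<noteq> j \<longrightarrow> ((\<lambda>e. b i + e) ` E) \<inter> ((\<lambda>e. b j + e) ` E) = {}) \<and>
     (\<forall>i. i * 4 ^ (N + 1) \<le> b i \<and> b i < (i + 1) * 4 ^ (N + 1)) \<and>
     (UNIV :: int set) = (\<Union>n \<in> {- (4 ^ (N + 1)) .. 4 ^ (N + 1)}. (\<lambda>x. n + x) ` range b)"
proof -
  define M :: int where "M = 4 ^ (N + 1)"
  define D where "D = (\<lambda>(a, c). a - c) ` (E \<times> E)"
  have M: "M > 0" unfolding M_def by simp
  have D: "finite D" unfolding D_def using assms(2) by simp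
  have "card D \<le> card (E \<times> E)" unfolding D_def by (rule card_image_le) (simp add: assms(2))
  also have "\<dots> = card E * card E" by (simp add: card_cartesian_product)
  also have "\<dots> \<le> 2^N * 2^N" using assms(3) by (simp add: mult_le_mono)
  also have "\<dots> = 4^N" by (simp add: power_mult_distrib[symmetric])
  finally have "card D \<le> 4^N" .
  then have "int (card D) \<le> int (4^N)" by (simp only: of_nat_le_iff)
  then have h: "int (card D) \<le> 4^N" by simp
  have "(0::int) < 4^N" by simp
  moreover have "M = 4 * 4^N" unfolding M_def by simp
  ultimately have c: "2 * int (card D) < M" using h by linarith
  define b where "b i = BB M D (Suc (int_encode i)) i" for i
  have bblk: "b i \<in> blk M i" for i
    unfolding b_def using BB_props[OF M D c] by blast
  have nd: "b i - b j \<notin> D" if "int_encode j < int_encode i" for i j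
  proof -
    have "BB M D (int_encode i) j = b j"
      using BB_stable[OF that, of M D] unfolding b_def by simp
    moreover have "BB M D (Suc (int_encode i)) (int_decode (int_encode i)) - BB M D (int_encode i) j \<notin> D"
      using BB_pick[OF M D c] by blast
    ultimately show ?thesis unfolding b_def by simp
  qed
  have nd2: "b i - b j \<notin> D" if "i \<noteq> j" for i j
  proof (cases "int_encode j < int_encode i")
    case True then show ?thesis using nd by blast
  next
    case False
    then have "int_encode i < int_encode j" using that
      by (metis int_encode_inverse linorder_neqE_nat)
    then have "b j - b i \<notin> D" using nd by blast
    moreover have "x \<in> D \<Longrightarrow> - x \<in> D" for x
      unfolding D_def by (auto simp: image_iff) (metis minus_diff_eq)
    ultimately show ?thesis by (metis minus_diff_eq)
  qed
  have P1: "\<forall>i j. i \<noteq> j \<longrightarrow> ((\<lambda>e. b i + e) ` E) \<inter> ((\<lambda>e. b j + e) ` E) = {}"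
  proof (intro allI impI)
    fix i j :: int assume ij: "i \<noteq> j"
    show "((\<lambda>e. b i + e) ` E) \<inter> ((\<lambda>e. b j + e) ` E) = {}"
    proof (rule ccontr)
      assume "\<not> ?thesis"
      then obtain e e' where e: "e \<in> E" "e' \<in> E" "b i + e = b j + e'" by auto
      then have "b i - b j = e' - e" by simp
      moreover have "e' - e \<in> D" unfolding D_def using e by force
      ultimately show False using nd2[OF ij] by simp
    qed
  qed
  have P2: "\<forall>i. i * 4 ^ (N + 1) \<le> b i \<and> b i < (i + 1) * 4 ^ (N + 1)"
    using bblk unfolding blk_def M_def by auto
  have P3: "(UNIV :: int set) = (\<Union>n \<in> {- (4 ^ (N + 1)) .. 4 ^ (N + 1)}. (\<lambda>x. n + x) ` range b)"
  proof (rule set_eqI, rule iffI)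
    fix z :: int
    define i where "i = z div M"
    have zz: "z = i*M + z mod M" "0 \<le> z mod M" "z mod M < M" using M unfolding i_def by auto
    have z: "i * M \<le> z" "z < (i+1)*M" using zz by (simp_all add: algebra_simps)
    have bi: "i * M \<le> b i" "b i < (i+1)*M" using bblk[of i] by (auto simp: blk_def)
    have "z - b i \<in> {-M..M}" using z bi by (simp add: algebra_simps)
    moreover have "z = (z - b i) + b i" by simp
    ultimately show "z \<in> (\<Union>n \<in> {- (4 ^ (N + 1)) .. 4 ^ (N + 1)}. (\<lambda>x. n + x) ` range b)"
      unfolding M_def by blast
  qed simp
  show ?thesis using P1 P2 P3 by blast
qed

end
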